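(* Let $4.999\le r\le 5$, $1\le\theta\le 2.2$, and $\delta\in\mathbb{R}$. Define $u_0=u_1=1$, $u_2=\theta+\delta$, and $u_n=(r-\theta)u_{n-1}-(r-2\theta)u_{n-2}-\theta u_{n-3}$ for $n\ge 3$. Let $q(x)=1-(r-\theta)x+(r-2\theta)x^2+\theta x^3$ with discriminant $D=-27\theta^2-4\theta^3+6\theta^2r+6\theta r^2+\theta^2r^2-4r^3-2\theta r^3+r^4$. Suppose $D<0$, so that $q$ has one real root $\alpha$ and two non-real complex conjugate roots $\beta,\gamma$, and suppose $|\alpha|>1>|\beta|=|\gamma|>0$. Then $u_N\ge u_{N+1}$ for some integer $N>0$. *)

theory Defs
  imports "HOL-Analysis.Analysis" "HOL-Computational_Algebra.Polynomial"
begin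

fun useq :: "real \<Rightarrow> real \<Rightarrow> real \<Rightarrow> nat \<Rightarrow> real" where
  "useq r \<theta> \<delta> 0 = 1"
| "useq r \<theta> \<delta> (Suc 0) = 1"
| "useq r \<theta> \<delta> (Suc (Suc 0)) = \<theta> + \<delta>"
| "useq r \<theta> \<delta> (Suc (Suc (Suc n))) =
     (r - \<theta>) * useq r \<theta> \<delta> (Suc (Suc n)) - (r - 2*\<theta>) * useq r \<theta> \<delta> (Suc n)
     - \<theta> * useq r \<theta> \<delta> n"

definition qpoly :: "real \<Rightarrow> real \<Rightarrow> real poly" where
  "qpoly r \<theta> = [:1, -(r - \<theta>), r - 2*\<theta>, \<theta>:]"

definition qdisc :: "real \<Rightarrow> real \<Rightarrow> real" where
  "qdisc r \<theta> = -27*\<theta>^2 - 4*\<theta>^3 + 6*\<theta>^2*r + 6*\<theta>*r^2 + \<theta>^2*r^2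
     - 4*r^3 - 2*\<theta>*r^3 + r^4"

end

theory Submission
  imports Defs
begin

lemma no_pos:
  fixes x :: "nat \<Rightarrow> real"
  assumes rec: "\<And>n. x (n+2) = s * x (n+1) - P * x n"
    and sP: "s^2 < 4*P"
    and pos: "\<And>n. n \<ge> N \<Longrightarrow> x n > 0"
  shows False
proof -
  define t where "t n = x (n+1) / x n" for n
  define mm where "mm = P - s^2/4"
  have mm0: "mm > 0" using sP by (simp add: mm_def)
  have tpos: "t n > 0" if "n \<ge> N" for n
    using pos[of n] pos[of "n+1"] that by (simp add: t_def)
  have tstep: "t (n+1) \<le> t n - mm / t n" if "n \<ge> N" for n
  proof -
    have xn: "x n > 0" and xn1: "x (n+1) > 0" using pos that by auto
    have "t (n+1) = (s * x (n+1) - P * x n) / x (n+1)"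
      using rec[of n] by (simp add: t_def)
    also have "\<dots> = s - P / t n" using xn xn1 by (simp add: t_def field_simps)
    also have "\<dots> = t n - (t n ^2 - s * t n + P) / t n"
      using tpos[OF that] by (simp add: field_simps power2_eq_square)
    also have "\<dots> \<le> t n - mm / t n"
    proof -
      have "t n ^2 - s * t n + P = (t n - s/2)^2 + mm"
        by (simp add: mm_def power2_eq_square algebra_simps)
      moreover have "(t n - s/2)^2 \<ge> 0" by simp
      ultimately have "t n ^2 - s * t n + P \<ge> mm" by linarith
      thus ?thesis using tpos[OF that]
        by (simp add: divide_right_mono)
    qed
    finally show ?thesis .
  qed
  define c where "c = mm / t N"
  have c0: "c > 0" using mm0 tpos[of N] by (simp add: c_def)
  have claim: "t (N+k) \<le> t N - real k * c" for k
  proof (induction k)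
    case 0 then show ?case by simp
  next
    case (Suc k)
    have tk: "t (N+k) > 0" using tpos by simp
    have "real k * c \<ge> 0" using c0 by simp
    hence le: "t (N+k) \<le> t N" using Suc by linarith
    have "mm / t N \<le> mm / t (N+k)"
      using tk le mm0 by (simp add: frac_le)
    hence "t (N + Suc k) \<le> t (N+k) - c"
      using tstep[of "N+k"] by (simp add: c_def)
    thus ?case using Suc by (simp add: algebra_simps)
  qed
  obtain k where k: "t N < real k * c" using ex_less_of_nat_mult[OF c0] by blast
  have "t (N+k) < 0" using claim[of k] k by simp
  thus False using tpos[of "N+k"] by simp
qed

lemma first_change:
  fixes x :: "nat \<Rightarrow> real"
  assumes "x n1 > 0" "x (n1 + k) \<le> 0"
  shows "\<exists>n\<ge>n1. x n > 0 \<and> x (n+1) \<le> 0"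
  using assms(2)
proof (induction k)
  case 0 then show ?case using assms(1) by simp
next
  case (Suc k)
  show ?case
  proof (cases "x (n1+k) \<le> 0")
    case True then show ?thesis using Suc.IH by blast
  next
    case False then show ?thesis using Suc.prems by (intro exI[of _ "n1+k"]) auto
  qed
qed

lemma Qbound:
  fixes y z s P M :: real
  assumes "\<bar>y\<bar> \<le> M" "\<bar>z\<bar> \<le> M" "P > 0"
  shows "y^2 - s*z*y + P*z^2 \<le> (1 + \<bar>s\<bar> + P) * M^2"
proof -
  have M0: "M \<ge> 0" using assms by linarith
  have a: "y^2 \<le> M^2" using assms(1) by (metis abs_ge_zero power2_abs power_mono)
  have b: "z^2 \<le> M^2" using assms(2) by (metis abs_ge_zero power2_abs power_mono)
  have "\<bar>z*y\<bar> \<le> M*M" using assms M0 by (simp add: abs_mult mult_mono)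
  hence "\<bar>s\<bar> * \<bar>z*y\<bar> \<le> \<bar>s\<bar> * (M*M)" by (simp add: mult_left_mono)
  moreover have "- s*z*y \<le> \<bar>s\<bar> * \<bar>z*y\<bar>"
  proof -
    have "- s*z*y \<le> \<bar>- s*z*y\<bar>" by (rule abs_ge_self)
    also have "\<dots> = \<bar>s\<bar> * \<bar>z*y\<bar>" by (simp add: abs_mult)
    finally show ?thesis .
  qed
  ultimately have "- s*z*y \<le> \<bar>s\<bar> * (M*M)" by linarith
  moreover have "P*z^2 \<le> P*M^2" using b assms(3) by simp
  ultimately show ?thesis using a by (simp add: power2_eq_square algebra_simps)
qed

lemma osc:
  fixes x :: "nat \<Rightarrow> real"
  assumes rec: "\<And>n. x (n+2) = s * x (n+1) - P * x n"
    and sP: "s^2 < 4*P" and P1: "P > 1"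
    and nz: "x 0 \<noteq> 0 \<or> x 1 \<noteq> 0"
    and lb: "\<And>n. n \<ge> 1 \<Longrightarrow> x n \<ge> -K"
  shows False
proof -
  define Q where "Q n = x (n+1)^2 - s * x n * x (n+1) + P * (x n)^2" for n
  have Qform: "Q n = (x (n+1) - s/2 * x n)^2 + (P - s^2/4) * (x n)^2" for n
    by (simp add: Q_def power2_eq_square algebra_simps)
  have Q0: "Q 0 > 0"
  proof (cases "x 0 = 0")
    case True then show ?thesis using nz by (simp add: Q_def)
  next
    case False
    have "(P - s^2/4) * (x 0)^2 > 0" using sP False by simp
    moreover have "(x (0+1) - s/2 * x 0)^2 \<ge> 0" by simp
    ultimately show ?thesis unfolding Qform[of 0] by linarith
  qed
  have Qs: "Q (Suc n) = P * Q n" for n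
  proof -
    have e: "x (Suc n + 1) = s * x (n+1) - P * x n" using rec[of n] by simp
    show ?thesis unfolding Q_def e by (simp add: power2_eq_square algebra_simps)
  qed
  have Qn: "Q n = P^n * Q 0" for n
    by (induction n) (simp_all add: Qs)
  define K' where "K' = \<bar>K\<bar>"
  have lb': "x n \<ge> -K'" if "n \<ge> 1" for n using lb[OF that] by (simp add: K'_def)
  have K'0: "K' \<ge> 0" by (simp add: K'_def)
  define M where "M = K' + (\<bar>s\<bar> + 1) * K' / P"
  have KM: "K' \<le> M" using P1 K'0 by (simp add: M_def)
  define B where "B = (1 + \<bar>s\<bar> + P) * M^2"
  obtain N where N: "B / Q 0 < P ^ N" using real_arch_pow[OF P1] by blast
  define N0 where "N0 = Suc N"
  have big: "Q n > B" if "n \<ge> N0" for n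
  proof -
    have "P ^ N \<le> P ^ n" using that P1 by (simp add: N0_def power_increasing)
    hence "B / Q 0 < P ^ n" using N by linarith
    thus ?thesis using Q0 Qn[of n] by (simp add: divide_less_eq)
  qed
  show False
  proof (cases "\<forall>n\<ge>N0. x n \<le> 0")
    case True
    have "\<bar>x N0\<bar> \<le> M" "\<bar>x (N0+1)\<bar> \<le> M"
      using True lb'[of N0] lb'[of "N0+1"] KM by (auto simp: N0_def)
    hence "Q N0 \<le> B" unfolding Q_def B_def using P1 by (intro Qbound) auto
    thus False using big[of N0] by simp
  next
    case False
    then obtain n1 where n1: "n1 \<ge> N0" "x n1 > 0" by force
    have "\<exists>n2\<ge>n1. x n2 \<le> 0"
    proof (rule ccontr)
      assume "\<not> ?thesis"
      hence "\<And>n. n \<ge> n1 \<Longrightarrow> x n > 0" by force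
      thus False using no_pos[OF rec sP] by blast
    qed
    then obtain n2 where n2: "n2 \<ge> n1" "x n2 \<le> 0" by blast
    have "x (n1 + (n2 - n1)) \<le> 0" using n2 by simp
    then obtain n where n: "n \<ge> n1" "x n > 0" "x (n+1) \<le> 0"
      using first_change[of x n1 "n2 - n1", OF n1(2)] by blast
    have n1': "n \<ge> 1" using n n1 by (simp add: N0_def)
    have a: "x (n+1) \<ge> -K'" "x (n+2) \<ge> -K'" using lb' n1' by auto
    have "P * x n = s * x (n+1) - x (n+2)" using rec[of n] by simp
    also have "\<dots> \<le> \<bar>s\<bar> * K' + K'"
    proof -
      have ax: "\<bar>x (n+1)\<bar> \<le> K'" using a(1) n(3) by simp
      have "s * x (n+1) \<le> \<bar>s * x (n+1)\<bar>" by (rule abs_ge_self)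
      also have "\<dots> = \<bar>s\<bar> * \<bar>x (n+1)\<bar>" by (simp add: abs_mult)
      also have "\<dots> \<le> \<bar>s\<bar> * K'" using ax by (simp add: mult_left_mono)
      finally have "s * x (n+1) \<le> \<bar>s\<bar> * K'" .
      thus ?thesis using a(2) by linarith
    qed
    finally have "x n \<le> (\<bar>s\<bar> + 1) * K' / P" using P1
      by (simp add: pos_le_divide_eq mult.commute algebra_simps)
    hence "\<bar>x n\<bar> \<le> M" using n(2) K'0 by (simp add: M_def)
    moreover have "\<bar>x (n+1)\<bar> \<le> M" using a(1) n(3) KM by simp
    ultimately have "Q n \<le> B" unfolding Q_def B_def using P1 by (intro Qbound) auto
    thus False using big[of n] n n1 by simp
  qed
qed

lemma core:
  fixes r \<theta> \<delta> a s P :: real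
  assumes e1: "a + s = r - \<theta>" and e2: "P + a * s = r - 2*\<theta>" and e3: "a*P = -\<theta>"
    and sP: "s^2 < 4*P" and P1: "P > 1" and a1: "\<bar>a\<bar> \<le> 1"
  shows "\<exists>N::nat. N > 0 \<and> useq r \<theta> \<delta> N \<ge> useq r \<theta> \<delta> (N + 1)"
proof (rule ccontr)
  assume H: "\<not> ?thesis"
  define u where "u = useq r \<theta> \<delta>"
  define d where "d n = u (n+1) - u n" for n
  have dpos: "d n > 0" if "n \<ge> 1" for n
  proof -
    have "\<not> (n > 0 \<and> useq r \<theta> \<delta> n \<ge> useq r \<theta> \<delta> (n + 1))" using H by blast
    thus ?thesis using that by (simp add: d_def u_def not_le)
  qed
  have urec: "u (Suc (Suc (Suc n))) = (a+s) * u (Suc (Suc n)) - (P + a * s) * u (Suc n) + a*P * u n" for n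
    unfolding u_def e1 e2 e3 by simp
  have drec: "d (n+3) = (a+s) * d (n+2) - (P + a * s) * d (n+1) + a*P * d n" for n
  proof -
    have "d (n+3) = u (Suc (Suc (Suc (Suc n)))) - u (Suc (Suc (Suc n)))"
      by (simp add: d_def numeral_3_eq_3)
    also have "\<dots> = (a+s) * d (n+2) - (P + a * s) * d (n+1) + a*P * d n"
      by (simp add: d_def urec numeral_2_eq_2 algebra_simps)
    finally show ?thesis .
  qed
  define f where "f n = d (n+2) - s * d (n+1) + P * d n" for n
  have fs: "f (Suc n) = a * f n" for n
  proof -
    have "f (Suc n) = d (n+3) - s * d (n+2) + P * d (n+1)"
      by (simp add: f_def numeral_2_eq_2 numeral_3_eq_3)
    also have "\<dots> = a * f n" unfolding drec f_def by (simp add: algebra_simps)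
    finally show ?thesis .
  qed
  have fn: "f n = a^n * f 0" for n by (induction n) (simp_all add: fs)
  define den where "den = a^2 - s*a + P"
  have den0: "den > 0"
  proof -
    have "den = (a - s/2)^2 + (P - s^2/4)" by (simp add: den_def power2_eq_square algebra_simps)
    moreover have "P - s^2/4 > 0" using sP by simp
    moreover have "(a - s/2)^2 \<ge> 0" by simp
    ultimately show ?thesis by linarith
  qed
  define A where "A = f 0 / den"
  have Aden: "A * den = f 0" using den0 by (simp add: A_def)
  define x where "x n = d n - A * a^n" for n
  have xrec: "x (n+2) = s * x (n+1) - P * x n" for n
  proof -
    have "d (n+2) = f n + s * d (n+1) - P * d n" by (simp add: f_def)
    also have "f n = a^n * (A*den)" using fn[of n] Aden by simp
    finally have "x (n+2) = a^n * (A*den) + s * d (n+1) - P * d n - A * a^(n+2)"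
      by (simp add: x_def)
    also have "\<dots> = s * x (n+1) - P * x n"
      by (simp add: x_def den_def power2_eq_square algebra_simps)
    finally show ?thesis .
  qed
  have d0: "d 0 = 0" by (simp add: d_def u_def)
  have nz: "x 0 \<noteq> 0 \<or> x 1 \<noteq> 0"
  proof (rule ccontr)
    assume "\<not> ?thesis"
    hence "x 0 = 0" "x 1 = 0" by auto
    hence "A = 0" using d0 by (simp add: x_def)
    hence "d 1 = 0" using \<open>x 1 = 0\<close> by (simp add: x_def)
    thus False using dpos[of 1] by simp
  qed
  have lb: "x n \<ge> - \<bar>A\<bar>" if "n \<ge> 1" for n
  proof -
    have "\<bar>a^n\<bar> \<le> 1" using a1 by (simp add: power_abs power_le_one)
    hence "\<bar>A * a^n\<bar> \<le> \<bar>A\<bar>" by (simp add: abs_mult mult_left_le)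
    thus ?thesis using dpos[OF that] by (simp add: x_def)
  qed
  show False using osc[OF xrec sP P1 nz lb] .
qed

theorem mainTheorem13:
  fixes r \<theta> \<delta> \<alpha> :: real and \<beta> \<gamma> :: complex
  assumes "4.999 \<le> r" "r \<le> 5" "1 \<le> \<theta>" "\<theta> \<le> 2.2"
    and "qdisc r \<theta> < 0"
    and "poly (qpoly r \<theta>) \<alpha> = 0"
    and "poly (map_poly complex_of_real (qpoly r \<theta>)) \<beta> = 0" "Im \<beta> \<noteq> 0"
    and "\<gamma> = cnj \<beta>"
    and "\<bar>\<alpha>\<bar> > 1" "1 > cmod \<beta>" "cmod \<beta> = cmod \<gamma>" "cmod \<gamma> > 0"
  shows "\<exists>N::nat. N > 0 \<and> useq r \<theta> \<delta> N \<ge> useq r \<theta> \<delta> (N + 1)"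
proof -
  note qa = assms(6) and qb = assms(7)
  define b1 where "b1 = Re \<beta>"
  define b2 where "b2 = Im \<beta>"
  have b2: "b2 \<noteq> 0" using assms(8) by (simp add: b2_def)
  define m where "m = b1^2 + b2^2"
  have m0: "m > 0" using b2 by (simp add: m_def add_nonneg_pos)
  have m1: "m < 1"
  proof -
    have "cmod \<beta> = sqrt m" by (simp add: cmod_def m_def b1_def b2_def)
    thus ?thesis using assms(11) by simp
  qed
  define g1 where "g1 = r - 2*\<theta> + \<theta>*\<alpha>"
  define g0 where "g0 = \<theta>*\<alpha>^2 + (r - 2*\<theta>)*\<alpha> - (r - \<theta>)"
  have qa': "1 - (r-\<theta>)*\<alpha> + (r - 2*\<theta>)*\<alpha>^2 + \<theta>*\<alpha>^3 = 0"
    using qa by (simp add: qpoly_def algebra_simps power2_eq_square power3_eq_cube)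
  have qb': "1 - of_real (r-\<theta>)*\<beta> + of_real (r - 2*\<theta>)*\<beta>^2 + of_real \<theta>*\<beta>^3 = 0"
  proof -
    have th0: "\<theta> \<noteq> 0" using assms(3) by simp
    show ?thesis using qb th0 by (simp add: qpoly_def map_poly_pCons algebra_simps power2_eq_square power3_eq_cube)
  qed
  have fact: "(\<beta> - of_real \<alpha>) * (of_real \<theta> * \<beta>^2 + of_real g1 * \<beta> + of_real g0) = 0"
  proof -
    have "(\<beta> - of_real \<alpha>) * (of_real \<theta> * \<beta>^2 + of_real g1 * \<beta> + of_real g0)
      = (1 - of_real (r-\<theta>)*\<beta> + of_real (r - 2*\<theta>)*\<beta>^2 + of_real \<theta>*\<beta>^3)
        - of_real (1 - (r-\<theta>)*\<alpha> + (r - 2*\<theta>)*\<alpha>^2 + \<theta>*\<alpha>^3)"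
      by (simp add: g1_def g0_def algebra_simps power2_eq_square power3_eq_cube)
    thus ?thesis using qa' qb' by simp
  qed
  have ne: "\<beta> - of_real \<alpha> \<noteq> 0" using assms(8) by (metis Im_complex_of_real eq_iff_diff_eq_0)
  hence g: "of_real \<theta> * \<beta>^2 + of_real g1 * \<beta> + of_real g0 = 0" using fact by simp
  have gre: "\<theta>*(b1^2 - b2^2) + g1*b1 + g0 = 0"
    using arg_cong[OF g, of Re] by (simp add: b1_def b2_def power2_eq_square)
  have gim: "\<theta>*(2*b1*b2) + g1*b2 = 0"
    using arg_cong[OF g, of Im] by (simp add: b1_def b2_def power2_eq_square algebra_simps)
  have G1: "g1 = -2*\<theta>*b1"
  proof -
    have "(\<theta>*(2*b1) + g1) * b2 = 0" using gim by (simp add: algebra_simps)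
    thus ?thesis using b2 by simp
  qed
  have G0: "g0 = \<theta>*m" using gre G1 by (simp add: m_def algebra_simps power2_eq_square)
  have F1: "-\<alpha> * g0 = 1" using qa' by (simp add: g0_def algebra_simps power2_eq_square power3_eq_cube)
  have al0: "\<alpha> \<noteq> 0" using assms(10) by auto
  define a where "a = 1/\<alpha>"
  define P where "P = 1/m"
  define s where "s = 2*b1/m"
  have F1': "-\<theta>*\<alpha>*m = 1" using F1 G0 by (simp add: algebra_simps)
  have ainv: "a = -\<theta>*m" using F1' al0 by (simp add: a_def field_simps)
  have Pinv: "1/m = -\<theta>*\<alpha>" using F1' m0 by (simp add: field_simps)
  have e3: "a*P = -\<theta>" using F1' al0 m0 by (simp add: a_def P_def field_simps)
  have e2: "P + a * s = r - 2*\<theta>"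
  proof -
    have "a * s = -2*\<theta>*b1" using ainv m0 by (simp add: s_def)
    also have "\<dots> = g1" using G1 by simp
    finally have "a * s = r - 2*\<theta> + \<theta>*\<alpha>" by (simp add: g1_def)
    moreover have "P = -\<theta>*\<alpha>" using Pinv by (simp add: P_def)
    ultimately show ?thesis by simp
  qed
  have e1: "a + s = r - \<theta>"
  proof -
    have c2: "r - \<theta> = \<theta>*\<alpha>^2 + (r - 2*\<theta>)*\<alpha> - \<theta>*m" using G0 by (simp add: g0_def)
    have "s = 2*b1*(-\<theta>*\<alpha>)" using Pinv by (simp add: s_def divide_inverse[of "2*b1"] inverse_eq_divide)
    also have "\<dots> = \<alpha> * (-2*\<theta>*b1)" by simp
    also have "\<dots> = \<alpha> * g1" using G1 by simp
    finally have "s = \<alpha> * g1" .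
    thus ?thesis using ainv c2 by (simp add: g1_def power2_eq_square algebra_simps)
  qed
  have sP: "s^2 < 4*P"
  proof -
    have "b1^2 < m" using b2 by (simp add: m_def)
    hence "4*b1^2/m^2 < 4*m/m^2" using m0 by (simp add: divide_strict_right_mono)
    thus ?thesis using m0 by (simp add: s_def P_def power2_eq_square field_simps)
  qed
  have P1: "P > 1" using m0 m1 by (simp add: P_def)
  have a1: "\<bar>a\<bar> \<le> 1" using assms(10) by (simp add: a_def abs_divide)
  show ?thesis using core[OF e1 e2 e3 sP P1 a1] .
qed

end
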